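(* Let $\Lambda$ be a finite, strongly connected $k$-graph and $y$ an $\mathbb{R}_+$-functor on $\Lambda$. Then the map $\theta\mapsto\mu_{y,\theta}$, from $[0,\infty)$ to the space of Borel probability measures on $\Lambda^\infty$ equipped with the weak* topology (as a subset of the dual of $C(\Lambda^\infty)$), is continuous.
   Context: A $k$-graph is a countable small category $\Lambda$ with a degree functor $d:\Lambda\to\mathbb{N}^k$ satisfying unique factorization: if $d(\lambda)=m+n$ there are unique $\eta,\nu$ with $\lambda=\eta\nu$, $d(\eta)=m$, $d(\nu)=n$. $\Lambda^n=d^{-1}(n)$, $\Lambda^0$ = vertices, $r,s$ range and source, $v\Lambda^nw=\{\lambda\in\Lambda^n:r(\lambda)=v,s(\lambda)=w\}$, $v\Lambda w=\bigcup_n v\Lambda^n w$; $e_i$ standard basis vectors. $\Lambda$ is finite if each $\Lambda^n$ is finite and strongly connected if $v\Lambda w\neq\emptyset$ for all vertices $v,w$. An $\mathbb{R}_+$-functor is $y:\Lambda\to[0,\infty)$ with $y(v)=0$ on vertices and $y(\lambda\nu)=y(\lambda)+y(\nu)$ when $s(\lambda)=r(\nu)$. $B_i(y,\theta)_{v,w}=\sum_{\lambda\in v\Lambda^{e_i}w}e^{-\theta y(\lambda)}$. For $\Lambda$ finite and strongly connected, there is a unique $\xi^{y,\theta}\in(0,\infty)^{\Lambda^0}$ with $\sum_v\xi^{y,\theta}_v=1$ and $B_i(y,\theta)\xi^{y,\theta}=\rho(B_i(y,\theta))\xi^{y,\theta}$ for all $i$, where $\rho$ denotes spectral radius ($>0$).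 $\rho(B(y,\theta))^m:=\prod_i\rho(B_i(y,\theta))^{m_i}$. $\Lambda^\infty$ is the set of degree-preserving functors from $\Omega_k$ (objects $\mathbb{N}^k$, morphisms $(m,n)$ with $m\le n$, $d(m,n)=n-m$) to $\Lambda$, with the compact topology generated by the cylinder sets $Z(\lambda)=\{x: x(0,d(\lambda))=\lambda\}$. $\mu_{y,\theta}$ denotes the unique Borel probability measure on $\Lambda^\infty$ with $\mu_{y,\theta}(Z(\lambda))=e^{-\theta y(\lambda)}\rho(B(y,\theta))^{-d(\lambda)}\xi^{y,\theta}_{s(\lambda)}$ for all $\lambda\in\Lambda$. *)

theory Defs
  imports "HOL-Probability.Probability_Measure"
begin

text \<open>Degrees live in N^k, represented as functions nat => nat vanishing on indices >= k.\<close>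

definition natk :: "nat \<Rightarrow> (nat \<Rightarrow> nat) set" where
  "natk k = {m. \<forall>i\<ge>k. m i = 0}"

definition unitv :: "nat \<Rightarrow> nat \<Rightarrow> nat" where
  "unitv i = (\<lambda>j. if j = i then 1 else 0)"

definition zerok :: "nat \<Rightarrow> nat" where
  "zerok = (\<lambda>_. 0)"

text \<open>A k-graph: a countable small category given by its set of morphisms Mor, range r and
 source s (valued in identity morphisms = objects), composition cmp (cmp a b = ab, defined when
 s a = r b), and a degree functor d into N^k with the unique factorization property.\<close>

definition objs :: "'a set \<Rightarrow> ('a \<Rightarrow> 'a) \<Rightarrow> 'a set" where
  "objs Mor r = r ` Mor"

definition kgraph ::
  "nat \<Rightarrow> 'a set \<Rightarrow> ('a \<Rightarrow> 'a) \<Rightarrow> ('a \<Rightarrow> 'a) \<Rightarrow> ('a \<Rightarrow> 'a \<Rightarrow> 'a) \<Rightarrow> ('a \<Rightarrow> nat \<Rightarrow> nat) \<Rightarrow> bool" where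
  "kgraph k Mor r s cmp d \<longleftrightarrow>
     countable Mor \<and>
     (\<forall>a\<in>Mor. r a \<in> Mor \<and> s a \<in> Mor) \<and>
     s ` Mor \<subseteq> r ` Mor \<and>
     (\<forall>v\<in>objs Mor r. r v = v \<and> s v = v) \<and>
     (\<forall>a\<in>Mor. \<forall>b\<in>Mor. s a = r b \<longrightarrow>
        cmp a b \<in> Mor \<and> r (cmp a b) = r a \<and> s (cmp a b) = s b) \<and>
     (\<forall>a\<in>Mor. cmp (r a) a = a \<and> cmp a (s a) = a) \<and>
     (\<forall>a\<in>Mor. \<forall>b\<in>Mor. \<forall>c\<in>Mor. s a = r b \<longrightarrow> s b = r c \<longrightarrow>
        cmp (cmp a b) c = cmp a (cmp b c)) \<and>
     (\<forall>a\<in>Mor. d a \<in> natk k) \<and>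
     (\<forall>a\<in>Mor. \<forall>b\<in>Mor. s a = r b \<longrightarrow> d (cmp a b) = (\<lambda>i. d a i + d b i)) \<and>
     (\<forall>a\<in>Mor. \<forall>m\<in>natk k. \<forall>n\<in>natk k. d a = (\<lambda>i. m i + n i) \<longrightarrow>
        (\<exists>!p. fst p \<in> Mor \<and> snd p \<in> Mor \<and> s (fst p) = r (snd p) \<and>
              cmp (fst p) (snd p) = a \<and> d (fst p) = m \<and> d (snd p) = n))"

definition finite_kgraph :: "nat \<Rightarrow> 'a set \<Rightarrow> ('a \<Rightarrow> nat \<Rightarrow> nat) \<Rightarrow> bool" where
  "finite_kgraph k Mor d \<longleftrightarrow> (\<forall>n\<in>natk k. finite {a\<in>Mor. d a = n})"

definition strongly_connected :: "'a set \<Rightarrow> ('a \<Rightarrow> 'a) \<Rightarrow> ('a \<Rightarrow> 'a) \<Rightarrow> bool" where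
  "strongly_connected Mor r s \<longleftrightarrow>
     (\<forall>v\<in>objs Mor r. \<forall>w\<in>objs Mor r. \<exists>a\<in>Mor. r a = v \<and> s a = w)"

definition Rplus_functor ::
  "'a set \<Rightarrow> ('a \<Rightarrow> 'a) \<Rightarrow> ('a \<Rightarrow> 'a) \<Rightarrow> ('a \<Rightarrow> 'a \<Rightarrow> 'a) \<Rightarrow> ('a \<Rightarrow> real) \<Rightarrow> bool" where
  "Rplus_functor Mor r s cmp y \<longleftrightarrow>
     (\<forall>a\<in>Mor. 0 \<le> y a) \<and> (\<forall>v\<in>objs Mor r. y v = 0) \<and>
     (\<forall>a\<in>Mor. \<forall>b\<in>Mor. s a = r b \<longrightarrow> y (cmp a b) = y a + y b)"

definition Bmat ::
  "'a set \<Rightarrow> ('a \<Rightarrow> 'a) \<Rightarrow> ('a \<Rightarrow> 'a) \<Rightarrow> ('a \<Rightarrow> nat \<Rightarrow> nat) \<Rightarrow> ('a \<Rightarrow> real) \<Rightarrow> real \<Rightarrow> nat \<Rightarrow> 'a \<Rightarrow> 'a \<Rightarrow> real" where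
  "Bmat Mor r s d y \<theta> i v w = (\<Sum>a\<in>{a\<in>Mor. d a = unitv i \<and> r a = v \<and> s a = w}. exp (- \<theta> * y a))"

definition spectral_radius :: "'a set \<Rightarrow> ('a \<Rightarrow> 'a \<Rightarrow> real) \<Rightarrow> real" where
  "spectral_radius V A = Sup {cmod c | c. \<exists>x :: 'a \<Rightarrow> complex. (\<exists>u\<in>V. x u \<noteq> 0) \<and>
      (\<forall>u\<in>V. (\<Sum>w\<in>V. complex_of_real (A u w) * x w) = c * x u)}"

definition rhoB ::
  "nat \<Rightarrow> 'a set \<Rightarrow> ('a \<Rightarrow> 'a) \<Rightarrow> ('a \<Rightarrow> 'a) \<Rightarrow> ('a \<Rightarrow> nat \<Rightarrow> nat) \<Rightarrow> ('a \<Rightarrow> real) \<Rightarrow> real \<Rightarrow> nat \<Rightarrow> real" where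
  "rhoB k Mor r s d y \<theta> i = spectral_radius (objs Mor r) (Bmat Mor r s d y \<theta> i)"

definition rhoB_pow ::
  "nat \<Rightarrow> 'a set \<Rightarrow> ('a \<Rightarrow> 'a) \<Rightarrow> ('a \<Rightarrow> 'a) \<Rightarrow> ('a \<Rightarrow> nat \<Rightarrow> nat) \<Rightarrow> ('a \<Rightarrow> real) \<Rightarrow> real \<Rightarrow> (nat \<Rightarrow> nat) \<Rightarrow> real" where
  "rhoB_pow k Mor r s d y \<theta> m = (\<Prod>i<k. rhoB k Mor r s d y \<theta> i ^ m i)"

definition is_xi ::
  "nat \<Rightarrow> 'a set \<Rightarrow> ('a \<Rightarrow> 'a) \<Rightarrow> ('a \<Rightarrow> 'a) \<Rightarrow> ('a \<Rightarrow> nat \<Rightarrow> nat) \<Rightarrow> ('a \<Rightarrow> real) \<Rightarrow> real \<Rightarrow> ('a \<Rightarrow> real) \<Rightarrow> bool" where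
  "is_xi k Mor r s d y \<theta> \<xi> \<longleftrightarrow>
     (\<forall>v\<in>objs Mor r. 0 < \<xi> v) \<and> (\<Sum>v\<in>objs Mor r. \<xi> v) = 1 \<and>
     (\<forall>i<k. \<forall>v\<in>objs Mor r.
        (\<Sum>w\<in>objs Mor r. Bmat Mor r s d y \<theta> i v w * \<xi> w) = rhoB k Mor r s d y \<theta> i * \<xi> v)"

text \<open>Infinite paths: degree-preserving functors Omega_k -> Lambda, where Omega_k has objects N^k
 and a morphism (m,n) for each m <= n, with r(m,n)=m, s(m,n)=n, (m,n)(n,p)=(m,p), d(m,n)=n-m.
 A path x is stored as x m n = image of (m,n); it is undefined off the morphisms of Omega_k.\<close>

definition inf_paths ::
  "nat \<Rightarrow> 'a set \<Rightarrow> ('a \<Rightarrow> 'a) \<Rightarrow> ('a \<Rightarrow> 'a) \<Rightarrow> ('a \<Rightarrow> 'a \<Rightarrow> 'a) \<Rightarrow> ('a \<Rightarrow> nat \<Rightarrow> nat)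
     \<Rightarrow> ((nat \<Rightarrow> nat) \<Rightarrow> (nat \<Rightarrow> nat) \<Rightarrow> 'a) set" where
  "inf_paths k Mor r s cmp d =
    {x. (\<forall>m n. \<not> (m \<in> natk k \<and> n \<in> natk k \<and> m \<le> n) \<longrightarrow> x m n = undefined) \<and>
        (\<forall>m\<in>natk k. \<forall>n\<in>natk k. m \<le> n \<longrightarrow>
           x m n \<in> Mor \<and> d (x m n) = (\<lambda>i. n i - m i) \<and>
           r (x m n) = x m m \<and> s (x m n) = x n n) \<and>
        (\<forall>m\<in>natk k. x m m \<in> objs Mor r) \<and>
        (\<forall>m\<in>natk k. \<forall>n\<in>natk k. \<forall>p\<in>natk k. m \<le> n \<longrightarrow> n \<le> p \<longrightarrow>
           cmp (x m n) (x n p) = x m p)}"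

definition cyl ::
  "nat \<Rightarrow> 'a set \<Rightarrow> ('a \<Rightarrow> 'a) \<Rightarrow> ('a \<Rightarrow> 'a) \<Rightarrow> ('a \<Rightarrow> 'a \<Rightarrow> 'a) \<Rightarrow> ('a \<Rightarrow> nat \<Rightarrow> nat) \<Rightarrow> 'a
     \<Rightarrow> ((nat \<Rightarrow> nat) \<Rightarrow> (nat \<Rightarrow> nat) \<Rightarrow> 'a) set" where
  "cyl k Mor r s cmp d a = {x \<in> inf_paths k Mor r s cmp d. x zerok (d a) = a}"

definition path_topology ::
  "nat \<Rightarrow> 'a set \<Rightarrow> ('a \<Rightarrow> 'a) \<Rightarrow> ('a \<Rightarrow> 'a) \<Rightarrow> ('a \<Rightarrow> 'a \<Rightarrow> 'a) \<Rightarrow> ('a \<Rightarrow> nat \<Rightarrow> nat)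
     \<Rightarrow> ((nat \<Rightarrow> nat) \<Rightarrow> (nat \<Rightarrow> nat) \<Rightarrow> 'a) topology" where
  "path_topology k Mor r s cmp d = topology_generated_by (cyl k Mor r s cmp d ` Mor)"

definition borel_of :: "'b topology \<Rightarrow> 'b measure" where
  "borel_of T = sigma (topspace T) {U. openin T U}"

definition is_mu ::
  "nat \<Rightarrow> 'a set \<Rightarrow> ('a \<Rightarrow> 'a) \<Rightarrow> ('a \<Rightarrow> 'a) \<Rightarrow> ('a \<Rightarrow> 'a \<Rightarrow> 'a) \<Rightarrow> ('a \<Rightarrow> nat \<Rightarrow> nat)
     \<Rightarrow> ('a \<Rightarrow> real) \<Rightarrow> real \<Rightarrow> ('a \<Rightarrow> real) \<Rightarrow> ((nat \<Rightarrow> nat) \<Rightarrow> (nat \<Rightarrow> nat) \<Rightarrow> 'a) measure \<Rightarrow> bool" where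
  "is_mu k Mor r s cmp d y \<theta> \<xi> M \<longleftrightarrow>
     prob_space M \<and> sets M = sets (borel_of (path_topology k Mor r s cmp d)) \<and>
     space M = topspace (path_topology k Mor r s cmp d) \<and>
     (\<forall>a\<in>Mor. measure M (cyl k Mor r s cmp d a) =
        exp (- \<theta> * y a) / rhoB_pow k Mor r s d y \<theta> (d a) * \<xi> (s a))"

end

theory Submission
  imports Defs
begin


locale kg =
  fixes k :: nat and Mor :: "'a set" and r s :: "'a \<Rightarrow> 'a"
    and cmp :: "'a \<Rightarrow> 'a \<Rightarrow> 'a" and d :: "'a \<Rightarrow> nat \<Rightarrow> nat"
  assumes KG: "kgraph k Mor r s cmp d"
    and FIN: "finite_kgraph k Mor d"
    and SC: "strongly_connected Mor r s"
begin

abbreviation "V \<equiv> objs Mor r"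

lemma rs_Mor: "a \<in> Mor \<Longrightarrow> r a \<in> Mor" "a \<in> Mor \<Longrightarrow> s a \<in> Mor"
  using KG unfolding kgraph_def by auto

lemma r_V: "a \<in> Mor \<Longrightarrow> r a \<in> V" unfolding objs_def by auto
lemma s_V: "a \<in> Mor \<Longrightarrow> s a \<in> V" using KG unfolding kgraph_def objs_def by auto
lemma V_Mor: "v \<in> V \<Longrightarrow> v \<in> Mor" using rs_Mor unfolding objs_def by auto
lemma V_rs: "v \<in> V \<Longrightarrow> r v = v" "v \<in> V \<Longrightarrow> s v = v"
  using KG unfolding kgraph_def by auto
lemma cmp_props: "a \<in> Mor \<Longrightarrow> b \<in> Mor \<Longrightarrow> s a = r b \<Longrightarrow>
   cmp a b \<in> Mor \<and> r (cmp a b) = r a \<and> s (cmp a b) = s b \<and> d (cmp a b) = (\<lambda>i. d a i + d b i)"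
  using KG unfolding kgraph_def by auto
lemma cmp_id: "a \<in> Mor \<Longrightarrow> cmp (r a) a = a" "a \<in> Mor \<Longrightarrow> cmp a (s a) = a"
  using KG unfolding kgraph_def by auto
lemma d_natk: "a \<in> Mor \<Longrightarrow> d a \<in> natk k" using KG unfolding kgraph_def by auto
lemma uf: "a \<in> Mor \<Longrightarrow> m \<in> natk k \<Longrightarrow> n \<in> natk k \<Longrightarrow> d a = (\<lambda>i. m i + n i) \<Longrightarrow>
        (\<exists>!p. fst p \<in> Mor \<and> snd p \<in> Mor \<and> s (fst p) = r (snd p) \<and>
              cmp (fst p) (snd p) = a \<and> d (fst p) = m \<and> d (snd p) = n)"
  using KG unfolding kgraph_def by blast

lemma uf_uniq:
  assumes "b \<in> Mor" "c \<in> Mor" "s b = r c" "b' \<in> Mor" "c' \<in> Mor" "s b' = r c'"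
    "cmp b c = cmp b' c'" "d b = d b'" "d c = d c'"
  shows "b = b' \<and> c = c'"
proof -
  have "cmp b c \<in> Mor" "d (cmp b c) = (\<lambda>i. d b i + d c i)" using cmp_props assms by auto
  from uf[OF this(1) d_natk[OF assms(1)] d_natk[OF assms(2)] this(2)]
  have "(b,c) = (b',c')" using assms by (metis fst_conv snd_conv)
  then show ?thesis by auto
qed

lemma uf_ex:
  assumes "a \<in> Mor" "m \<in> natk k" "n \<in> natk k" "d a = (\<lambda>i. m i + n i)"
  obtains b c where "b \<in> Mor" "c \<in> Mor" "s b = r c" "cmp b c = a" "d b = m" "d c = n"
  using uf[OF assms] by blast

lemma d_V: assumes "v \<in> V" shows "d v = (\<lambda>i. 0)"
proof -
  have v: "v \<in> Mor" "r v = v" "s v = v" using assms V_Mor V_rs by auto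
  have "cmp v v = v" using cmp_id(1)[OF v(1)] v by simp
  then have "d v = (\<lambda>i. d v i + d v i)" using cmp_props[OF v(1) v(1)] v by metis
  then show ?thesis by (metis add_cancel_left_left)
qed

lemma zero_natk: "(\<lambda>i. 0) \<in> natk k" by (simp add: natk_def)

lemma deg0_V: assumes "a \<in> Mor" "d a = (\<lambda>i. 0)" shows "a \<in> V" "r a = a" "s a = a"
proof -
  have ra: "r a \<in> V" "s a \<in> V" using assms r_V s_V by auto
  have "r a = a \<and> a = s a"
    apply (rule uf_uniq)
    using assms ra V_Mor V_rs d_V cmp_id by auto
  then show "a \<in> V" "r a = a" "s a = a" using ra by auto
qed

lemma V_finite: "finite V"
proof -
  have "V \<subseteq> {a\<in>Mor. d a = (\<lambda>i. 0)}" using V_Mor d_V by auto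
  moreover have "finite {a\<in>Mor. d a = (\<lambda>i. 0)}" using FIN zero_natk unfolding finite_kgraph_def by auto
  ultimately show ?thesis by (rule finite_subset)
qed

lemma deg_finite: "n \<in> natk k \<Longrightarrow> finite {a\<in>Mor. d a = n}"
  using FIN unfolding finite_kgraph_def by auto

end



context kg begin

lemma unitv_natk: "i < k \<Longrightarrow> unitv i \<in> natk k" by (simp add: natk_def unitv_def)

inductive walk :: "'a \<Rightarrow> 'a \<Rightarrow> bool" where
  refl: "v \<in> V \<Longrightarrow> walk v v"
| step: "e \<in> Mor \<Longrightarrow> i < k \<Longrightarrow> d e = unitv i \<Longrightarrow> walk (s e) w \<Longrightarrow> walk (r e) w"

lemma walk_exists_aux: "\<forall>a. a \<in> Mor \<longrightarrow> (\<Sum>i<k. d a i) = N \<longrightarrow> walk (r a) (s a)"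
proof (induction N rule: less_induct)
  case (less N)
  show ?case
  proof (intro allI impI)
    fix a assume a: "a \<in> Mor" "(\<Sum>i<k. d a i) = N"
    show "walk (r a) (s a)"
    proof (cases "\<forall>i<k. d a i = 0")
      case True
      have "d a = (\<lambda>i. 0)"
      proof
        fix i show "d a i = 0" using True d_natk[OF a(1)] unfolding natk_def
          by (cases "i < k") auto
      qed
      then show ?thesis using deg0_V[OF a(1)] walk.refl by metis
    next
      case False
      then obtain i where i: "i < k" "d a i > 0" by auto
      define n where "n = (\<lambda>j. d a j - unitv i j)"
      have nn: "n \<in> natk k" using d_natk[OF a(1)] unfolding n_def natk_def by auto
      have da: "d a = (\<lambda>j. unitv i j + n j)" using i unfolding n_def unitv_def by auto
      obtain b c where bc: "b \<in> Mor" "c \<in> Mor" "s b = r c" "cmp b c = a" "d b = unitv i" "d c = n"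
        using uf_ex[OF a(1) unitv_natk[OF i(1)] nn da] by blast
      have "(\<Sum>j<k. d c j) < N"
      proof -
        have "(\<Sum>j<k. d a j) = (\<Sum>j<k. unitv i j) + (\<Sum>j<k. d c j)"
          using da bc by (simp add: sum.distrib)
        moreover have "(\<Sum>j<k. unitv i j) = 1" using i unfolding unitv_def by simp
        ultimately show ?thesis using a(2) by simp
      qed
      then have "walk (r c) (s c)" using less bc by blast
      then have "walk (r b) (s c)" using walk.step[OF bc(1) i(1) bc(5)] bc(3) by simp
      then show ?thesis using cmp_props[OF bc(1,2,3)] bc(4) by simp
    qed
  qed
qed

lemma walk_exists: "a \<in> Mor \<Longrightarrow> walk (r a) (s a)" using walk_exists_aux by blast

lemma walk_V: "v \<in> V \<Longrightarrow> w \<in> V \<Longrightarrow> walk v w"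
  using SC walk_exists unfolding strongly_connected_def by metis

end

locale kgy = kg +
  fixes y :: "'a \<Rightarrow> real"
  assumes RF: "Rplus_functor Mor r s cmp y"
begin

abbreviation "B \<theta> \<equiv> Bmat Mor r s d y \<theta>"

lemma B_nonneg: "0 \<le> B \<theta> i v w" unfolding Bmat_def by (auto intro: sum_nonneg)

lemma y_nonneg: "a \<in> Mor \<Longrightarrow> 0 \<le> y a" using RF unfolding Rplus_functor_def by auto

lemma B_edge_pos:
  assumes "e \<in> Mor" "i < k" "d e = unitv i"
  shows "0 < B \<theta> i (r e) (s e)"
proof -
  let ?S = "{a\<in>Mor. d a = unitv i \<and> r a = r e \<and> s a = s e}"
  have fin: "finite ?S" using deg_finite[OF unitv_natk[OF assms(2)]] by (rule finite_subset[rotated]) auto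
  have "e \<in> ?S" using assms by auto
  then have "exp (- \<theta> * y e) \<le> (\<Sum>a\<in>?S. exp (- \<theta> * y a))"
    using fin by (intro member_le_sum) auto
  then show ?thesis unfolding Bmat_def by (smt (verit) exp_gt_zero)
qed

lemma propagate:
  assumes nn: "\<forall>v\<in>V. 0 \<le> z v" and sg: "\<forall>i<k. 0 \<le> \<sigma> i"
    and eig: "\<forall>i<k. \<forall>v\<in>V. (\<Sum>w\<in>V. B \<theta> i v w * z w) = \<sigma> i * z v"
    and wk: "walk v w" and pos: "0 < z w"
  shows "0 < z v"
  using wk pos
proof (induction rule: walk.induct)
  case (refl v) then show ?case by simp
next
  case (step e i w)
  have pe: "0 < z (s e)" using step by simp
  have sV: "s e \<in> V" "r e \<in> V" using step s_V r_V by auto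
  have "B \<theta> i (r e) (s e) * z (s e) \<le> (\<Sum>u\<in>V. B \<theta> i (r e) u * z u)"
    using V_finite sV nn by (intro member_le_sum) (auto intro: mult_nonneg_nonneg B_nonneg)
  moreover have "0 < B \<theta> i (r e) (s e) * z (s e)" using B_edge_pos[OF step(1-3)] pe by simp
  ultimately have "0 < \<sigma> i * z (r e)" using eig step(2) sV by simp
  then show ?case using nn sV sg step(2) by (auto simp add: zero_less_mult_iff)
qed

lemma propagate_all:
  assumes nn: "\<forall>v\<in>V. 0 \<le> z v" and sg: "\<forall>i<k. 0 \<le> \<sigma> i"
    and eig: "\<forall>i<k. \<forall>v\<in>V. (\<Sum>w\<in>V. B \<theta> i v w * z w) = \<sigma> i * z v"
    and w: "w \<in> V" and pos: "0 < z w" and v: "v \<in> V"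
  shows "0 < z v"
  using propagate[OF nn sg eig walk_V[OF v w] pos] .

end



context kgy begin

definition eigpair :: "real \<Rightarrow> ('a \<Rightarrow> real) \<Rightarrow> (nat \<Rightarrow> real) \<Rightarrow> bool" where
  "eigpair \<theta> z \<sigma> \<longleftrightarrow> (\<forall>v\<in>V. 0 \<le> z v) \<and> (\<Sum>v\<in>V. z v) = 1 \<and> (\<forall>i<k. 0 \<le> \<sigma> i) \<and>
     (\<forall>i<k. \<forall>v\<in>V. (\<Sum>w\<in>V. B \<theta> i v w * z w) = \<sigma> i * z v)"

lemma eigpair_pos: assumes "eigpair \<theta> z \<sigma>" "v \<in> V" shows "0 < z v"
proof -
  have "\<exists>w\<in>V. 0 < z w"
  proof (rule ccontr)
    assume "\<not> ?thesis"
    then have "\<forall>w\<in>V. z w = 0" using assms(1) unfolding eigpair_def by force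
    then show False using assms(1) unfolding eigpair_def by simp
  qed
  then obtain w where "w \<in> V" "0 < z w" by blast
  then show ?thesis using propagate_all assms unfolding eigpair_def by blast
qed

lemma V_ne: "eigpair \<theta> z \<sigma> \<Longrightarrow> V \<noteq> {}" unfolding eigpair_def by auto

lemma min_ratio:
  assumes "eigpair \<theta> z1 \<sigma>1" "eigpair \<theta> z2 \<sigma>2"
  obtains c v0 where "v0 \<in> V" "c * z1 v0 = z2 v0" "\<forall>v\<in>V. c * z1 v \<le> z2 v" "0 < c"
proof -
  let ?c = "Min ((\<lambda>v. z2 v / z1 v) ` V)"
  have ne: "V \<noteq> {}" using V_ne assms by blast
  have "?c \<in> (\<lambda>v. z2 v / z1 v) ` V" using Min_in[of "(\<lambda>v. z2 v / z1 v) ` V"] V_finite ne by blast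
  then obtain v0 where v0: "v0 \<in> V" "?c = z2 v0 / z1 v0" by auto
  have "\<forall>v\<in>V. ?c * z1 v \<le> z2 v"
  proof
    fix v assume v: "v \<in> V"
    have "?c \<le> z2 v / z1 v" using V_finite v by simp
    moreover have "0 < z1 v" using eigpair_pos assms v by blast
    ultimately show "?c * z1 v \<le> z2 v" by (simp add: le_divide_eq)
  qed
  moreover have "?c * z1 v0 = z2 v0" using v0 eigpair_pos[OF assms(1) v0(1)] by simp
  moreover have "0 < ?c" using v0 eigpair_pos[OF assms(1) v0(1)] eigpair_pos[OF assms(2) v0(1)] by simp
  ultimately show ?thesis using that v0 by blast
qed

lemma sigma_le:
  assumes "eigpair \<theta> z1 \<sigma>1" "eigpair \<theta> z2 \<sigma>2" "i < k"
  shows "\<sigma>1 i \<le> \<sigma>2 i"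
proof -
  obtain c v0 where c: "v0 \<in> V" "c * z1 v0 = z2 v0" "\<forall>v\<in>V. c * z1 v \<le> z2 v" "0 < c"
    using min_ratio[OF assms(1,2)] by blast
  have "c * (\<sigma>1 i * z1 v0) = c * (\<Sum>w\<in>V. B \<theta> i v0 w * z1 w)"
    using assms c unfolding eigpair_def by simp
  also have "\<dots> = (\<Sum>w\<in>V. B \<theta> i v0 w * (c * z1 w))" by (simp add: sum_distrib_left algebra_simps)
  also have "\<dots> \<le> (\<Sum>w\<in>V. B \<theta> i v0 w * z2 w)"
    using c by (intro sum_mono mult_left_mono B_nonneg) auto
  also have "\<dots> = \<sigma>2 i * z2 v0" using assms c unfolding eigpair_def by simp
  finally have "\<sigma>1 i * z2 v0 \<le> \<sigma>2 i * z2 v0" using c(2) by (metis mult.left_commute)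
  then show ?thesis using eigpair_pos[OF assms(2) c(1)] by simp
qed

lemma eig_uniq:
  assumes "eigpair \<theta> z1 \<sigma>1" "eigpair \<theta> z2 \<sigma>2"
  shows "\<forall>v\<in>V. z1 v = z2 v" "\<forall>i<k. \<sigma>1 i = \<sigma>2 i"
proof -
  show sg: "\<forall>i<k. \<sigma>1 i = \<sigma>2 i" using sigma_le assms by (meson order_antisym)
  obtain c v0 where c: "v0 \<in> V" "c * z1 v0 = z2 v0" "\<forall>v\<in>V. c * z1 v \<le> z2 v" "0 < c"
    using min_ratio[OF assms(1,2)] by blast
  define z where "z = (\<lambda>v. z2 v - c * z1 v)"
  have znn: "\<forall>v\<in>V. 0 \<le> z v" using c unfolding z_def by auto
  have zeig: "\<forall>i<k. \<forall>v\<in>V. (\<Sum>w\<in>V. B \<theta> i v w * z w) = \<sigma>1 i * z v"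
  proof (intro allI impI ballI)
    fix i v assume iv: "i < k" "v \<in> V"
    have "(\<Sum>w\<in>V. B \<theta> i v w * z w) = (\<Sum>w\<in>V. B \<theta> i v w * z2 w) - c * (\<Sum>w\<in>V. B \<theta> i v w * z1 w)"
      unfolding z_def by (simp add: sum_subtractf sum_distrib_left algebra_simps)
    also have "\<dots> = \<sigma>1 i * z v" using assms iv sg unfolding eigpair_def z_def by (simp add: algebra_simps)
    finally show "(\<Sum>w\<in>V. B \<theta> i v w * z w) = \<sigma>1 i * z v" .
  qed
  have z0: "\<forall>v\<in>V. z v = 0"
  proof (rule ccontr)
    assume "\<not> ?thesis"
    then obtain w where w: "w \<in> V" "0 < z w" using znn by force
    have "0 < z v0" using propagate_all[OF znn _ zeig w c(1)] assms(1) unfolding eigpair_def by blast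
    then show False using c unfolding z_def by simp
  qed
  then have e: "\<forall>v\<in>V. z2 v = c * z1 v" unfolding z_def by auto
  have "1 = (\<Sum>v\<in>V. z2 v)" using assms unfolding eigpair_def by simp
  also have "\<dots> = c * (\<Sum>v\<in>V. z1 v)" using e by (simp add: sum_distrib_left)
  also have "\<dots> = c" using assms unfolding eigpair_def by simp
  finally show "\<forall>v\<in>V. z1 v = z2 v" using e by simp
qed

end



lemma subseq_finite:
  fixes X :: "nat \<Rightarrow> 'b \<Rightarrow> real"
  assumes "finite I" "\<forall>n. \<forall>j\<in>I. \<bar>X n j\<bar> \<le> M"
  shows "\<exists>h L. strict_mono h \<and> (\<forall>j\<in>I. (\<lambda>n. X (h n) j) \<longlonglongrightarrow> L j)"
  using assms
proof (induction I rule: finite_induct)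
  case empty
  then show ?case by (rule_tac x=id in exI) (auto simp: strict_mono_def)
next
  case (insert j0 I)
  then obtain h L where hL: "strict_mono h" "\<forall>j\<in>I. (\<lambda>n. X (h n) j) \<longlonglongrightarrow> L j" by auto
  obtain g where g: "strict_mono g" "monoseq (\<lambda>n. X (h (g n)) j0)"
    using seq_monosub[of "\<lambda>n. X (h n) j0"] by blast
  have "Bseq (\<lambda>n. X (h (g n)) j0)" using insert.prems by (intro BseqI'[where K=M]) auto
  then have "convergent (\<lambda>n. X (h (g n)) j0)" using g Bseq_monoseq_convergent by blast
  then obtain l where l: "(\<lambda>n. X (h (g n)) j0) \<longlonglongrightarrow> l" unfolding convergent_def by blast
  have sm: "strict_mono (h \<circ> g)" using hL(1) g(1) unfolding strict_mono_def by simp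
  have "\<forall>j\<in>insert j0 I. (\<lambda>n. X ((h \<circ> g) n) j) \<longlonglongrightarrow> (L(j0 := l)) j"
  proof
    fix j assume j: "j \<in> insert j0 I"
    show "(\<lambda>n. X ((h \<circ> g) n) j) \<longlonglongrightarrow> (L(j0 := l)) j"
    proof (cases "j = j0")
      case True then show ?thesis using l by simp
    next
      case False
      then have "j \<in> I" using j by simp
      then have "(\<lambda>n. X (h n) j) \<longlonglongrightarrow> L j" using hL by blast
      from LIMSEQ_subseq_LIMSEQ[OF this g(1)] show ?thesis using False by (simp add: o_def)
    qed
  qed
  then show ?case using sm by blast
qed

lemma not_LIMSEQ_subseq:
  fixes X :: "nat \<Rightarrow> real"
  assumes "\<not> X \<longlonglongrightarrow> L"
  obtains e and h :: "nat \<Rightarrow> nat" where "e > 0" "strict_mono h" "\<forall>n. e \<le> dist (X (h n)) L"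
proof -
  obtain e where e: "e > 0" "\<forall>N. \<exists>n\<ge>N. \<not> dist (X n) L < e"
    using assms unfolding LIMSEQ_def by blast
  have "infinite {n. e \<le> dist (X n) L}"
    unfolding infinite_nat_iff_unbounded_le using e by (auto simp: not_less)
  from infinite_enumerate[OF this] have "\<exists>h::nat\<Rightarrow>nat. strict_mono h \<and> (\<forall>n. e \<le> dist (X (h n)) L)" by simp
  then obtain h :: "nat \<Rightarrow> nat" where "strict_mono h \<and> (\<forall>n. e \<le> dist (X (h n)) L)" by blast
  then show ?thesis using that e by blast
qed

locale kgx = kgy +
  fixes \<xi> :: "real \<Rightarrow> 'a \<Rightarrow> real"
  assumes XI: "\<And>\<theta>. 0 \<le> \<theta> \<Longrightarrow> is_xi k Mor r s d y \<theta> (\<xi> \<theta>)"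
begin

abbreviation "\<rho> \<theta> i \<equiv> rhoB k Mor r s d y \<theta> i"

lemma xi_basic: assumes "0 \<le> \<theta>"
  shows "\<forall>v\<in>V. 0 < \<xi> \<theta> v" "(\<Sum>v\<in>V. \<xi> \<theta> v) = 1"
    "\<forall>i<k. \<forall>v\<in>V. (\<Sum>w\<in>V. B \<theta> i v w * \<xi> \<theta> w) = \<rho> \<theta> i * \<xi> \<theta> v"
  using XI[OF assms] unfolding is_xi_def by auto

lemma V_nonempty: "V \<noteq> {}" using xi_basic(2)[of 0] by auto

lemma rho_nonneg: assumes "0 \<le> \<theta>" "i < k" shows "0 \<le> \<rho> \<theta> i"
proof -
  obtain v where v: "v \<in> V" using V_nonempty by blast
  have "0 \<le> (\<Sum>w\<in>V. B \<theta> i v w * \<xi> \<theta> w)"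
    using xi_basic(1)[OF assms(1)] by (intro sum_nonneg mult_nonneg_nonneg B_nonneg) auto
  then have "0 \<le> \<rho> \<theta> i * \<xi> \<theta> v" using xi_basic(3)[OF assms(1)] assms(2) v by simp
  moreover have "0 < \<xi> \<theta> v" using xi_basic(1)[OF assms(1)] v by blast
  ultimately show ?thesis by (simp add: zero_le_mult_iff)
qed

lemma xi_eigpair: "0 \<le> \<theta> \<Longrightarrow> eigpair \<theta> (\<xi> \<theta>) (\<rho> \<theta>)"
  unfolding eigpair_def using xi_basic rho_nonneg by (auto intro: less_imp_le)

lemma xi_le1: assumes "0 \<le> \<theta>" "v \<in> V" shows "\<xi> \<theta> v \<le> 1"
proof -
  have "\<xi> \<theta> v \<le> (\<Sum>v\<in>V. \<xi> \<theta> v)" using V_finite assms xi_basic(1)[OF assms(1)]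
    by (intro member_le_sum) (auto intro: less_imp_le)
  then show ?thesis using xi_basic(2)[OF assms(1)] by simp
qed

lemma B_mono: assumes "0 \<le> \<theta>" shows "B \<theta> i v w \<le> B 0 i v w"
  unfolding Bmat_def
proof (rule sum_mono)
  fix a assume "a \<in> {a \<in> Mor. d a = unitv i \<and> r a = v \<and> s a = w}"
  then have "0 \<le> y a" using y_nonneg by auto
  then show "exp (- \<theta> * y a) \<le> exp (- 0 * y a)" using assms by (simp add: mult_nonneg_nonneg)
qed

definition "Bnd = (\<Sum>i<k. \<Sum>v\<in>V. \<Sum>w\<in>V. B 0 i v w)"

lemma rho_bound: assumes "0 \<le> \<theta>" "i < k" shows "\<rho> \<theta> i \<le> Bnd"
proof -
  have "\<rho> \<theta> i = (\<Sum>v\<in>V. \<rho> \<theta> i * \<xi> \<theta> v)" using xi_basic(2)[OF assms(1)] by (simp add: sum_distrib_left[symmetric])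
  also have "\<dots> = (\<Sum>v\<in>V. \<Sum>w\<in>V. B \<theta> i v w * \<xi> \<theta> w)" using xi_basic(3)[OF assms(1)] assms(2) by simp
  also have "\<dots> \<le> (\<Sum>v\<in>V. \<Sum>w\<in>V. B 0 i v w)"
  proof (intro sum_mono)
    fix v w assume "v \<in> V" "w \<in> V"
    have "B \<theta> i v w * \<xi> \<theta> w \<le> B \<theta> i v w * 1"
      using xi_le1[OF assms(1) \<open>w \<in> V\<close>] B_nonneg by (intro mult_left_mono) auto
    then show "B \<theta> i v w * \<xi> \<theta> w \<le> B 0 i v w" using B_mono[OF assms(1)] by (smt (verit))
  qed
  also have "\<dots> \<le> Bnd" unfolding Bnd_def using assms(2)
    by (intro member_le_sum) (auto intro!: sum_nonneg B_nonneg)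
  finally show ?thesis .
qed

lemma B_tendsto: "t \<longlonglongrightarrow> a \<Longrightarrow> (\<lambda>n. B (t n) i v w) \<longlonglongrightarrow> B a i v w"
  unfolding Bmat_def by (intro tendsto_intros)

lemma xi_cont: assumes "v \<in> V" shows "continuous_on {0..} (\<lambda>\<theta>. \<xi> \<theta> v)"
proof (rule continuous_on_sequentiallyI)
  fix u :: "nat \<Rightarrow> real" and a
  assume u: "\<forall>n. u n \<in> {0..}" and a: "a \<in> {0..}" and ua: "u \<longlonglongrightarrow> a"
  show "(\<lambda>n. \<xi> (u n) v) \<longlonglongrightarrow> \<xi> a v"
  proof (rule ccontr)
    assume "\<not> ?thesis"
    then obtain e and h :: "nat \<Rightarrow> nat" where eh: "e > 0" "strict_mono h" "\<forall>n. e \<le> dist (\<xi> (u (h n)) v) (\<xi> a v)"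
      by (rule not_LIMSEQ_subseq)
    define X where "X (n::nat) j = (case j of Inl w \<Rightarrow> \<xi> (u (h n)) w | Inr i \<Rightarrow> \<rho> (u (h n)) i)" for n j
    define I where "I = Inl ` V \<union> Inr ` {..<k}"
    have finI: "finite I" unfolding I_def using V_finite by simp
    have bnd: "\<forall>n. \<forall>j\<in>I. \<bar>X n j\<bar> \<le> max 1 Bnd"
    proof (intro allI ballI)
      fix n j assume j: "j \<in> I"
      have u0: "0 \<le> u (h n)" using u by auto
      show "\<bar>X n j\<bar> \<le> max 1 Bnd"
      proof (cases j)
        case (Inl w)
        then have "w \<in> V" using j unfolding I_def by auto
        then have "0 < \<xi> (u (h n)) w" "\<xi> (u (h n)) w \<le> 1" using xi_le1[OF u0] xi_basic(1)[OF u0] by auto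
        then show ?thesis using Inl unfolding X_def by simp
      next
        case (Inr i)
        then have "i < k" using j unfolding I_def by auto
        then have "0 \<le> \<rho> (u (h n)) i" "\<rho> (u (h n)) i \<le> Bnd" using rho_bound[OF u0] rho_nonneg[OF u0] by auto
        then show ?thesis using Inr unfolding X_def by simp
      qed
    qed
    obtain g :: "nat \<Rightarrow> nat" and L where gL: "strict_mono g" "\<forall>j\<in>I. (\<lambda>n. X (g n) j) \<longlonglongrightarrow> L j"
      using subseq_finite[OF finI bnd] by blast
    define t where "t n = u (h (g n))" for n
    have t0: "\<And>n. 0 \<le> t n" using u unfolding t_def by auto
    have sm: "strict_mono (h \<circ> g)" using eh(2) gL(1) unfolding strict_mono_def by simp
    have ta: "t \<longlonglongrightarrow> a" using LIMSEQ_subseq_LIMSEQ[OF ua sm] unfolding t_def by (simp add: o_def)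
    define z where "z w = L (Inl w)" for w
    define \<sigma> where "\<sigma> i = L (Inr i)" for i
    have zt: "(\<lambda>n. \<xi> (t n) w) \<longlonglongrightarrow> z w" if w: "w \<in> V" for w
    proof -
      have "Inl w \<in> I" using w unfolding I_def by simp
      then have "(\<lambda>n. X (g n) (Inl w)) \<longlonglongrightarrow> L (Inl w)" using gL(2) by blast
      then show ?thesis unfolding X_def t_def z_def by simp
    qed
    have st: "(\<lambda>n. \<rho> (t n) i) \<longlonglongrightarrow> \<sigma> i" if i: "i < k" for i
    proof -
      have "Inr i \<in> I" using i unfolding I_def by simp
      then have "(\<lambda>n. X (g n) (Inr i)) \<longlonglongrightarrow> L (Inr i)" using gL(2) by blast
      then show ?thesis unfolding X_def t_def \<sigma>_def by simp
    qed
    have ep: "eigpair a z \<sigma>"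
      unfolding eigpair_def
    proof (intro conjI allI impI ballI)
      fix w assume w: "w \<in> V"
      have "\<forall>n. 0 \<le> \<xi> (t n) w" using xi_basic(1)[OF t0] w by (simp add: less_imp_le)
      then show "0 \<le> z w" using LIMSEQ_le_const[OF zt[OF w]] by blast
    next
      have "(\<lambda>n. \<Sum>w\<in>V. \<xi> (t n) w) \<longlonglongrightarrow> (\<Sum>w\<in>V. z w)" by (intro tendsto_sum zt)
      moreover have "(\<lambda>n. \<Sum>w\<in>V. \<xi> (t n) w) = (\<lambda>n. 1)" using xi_basic(2)[OF t0] by simp
      ultimately have "(\<lambda>n. 1::real) \<longlonglongrightarrow> (\<Sum>w\<in>V. z w)" by simp
      then show "(\<Sum>w\<in>V. z w) = 1" using LIMSEQ_unique[OF _ tendsto_const] by blast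
    next
      fix i assume i: "i < k"
      show "0 \<le> \<sigma> i" using rho_nonneg[OF t0 i] LIMSEQ_le_const[OF st[OF i]] by blast
    next
      fix i w assume i: "i < k" and w: "w \<in> V"
      have "(\<lambda>n. \<Sum>x\<in>V. B (t n) i w x * \<xi> (t n) x) \<longlonglongrightarrow> (\<Sum>x\<in>V. B a i w x * z x)"
        using zt by (intro tendsto_sum tendsto_mult B_tendsto[OF ta]) auto
      moreover have "(\<lambda>n. \<Sum>x\<in>V. B (t n) i w x * \<xi> (t n) x) = (\<lambda>n. \<rho> (t n) i * \<xi> (t n) w)"
        using xi_basic(3)[OF t0] i w by simp
      moreover have "(\<lambda>n. \<rho> (t n) i * \<xi> (t n) w) \<longlonglongrightarrow> \<sigma> i * z w"
        by (intro tendsto_mult st[OF i] zt[OF w])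
      ultimately show "(\<Sum>x\<in>V. B a i w x * z x) = \<sigma> i * z w" using LIMSEQ_unique by simp
    qed
    have "z v = \<xi> a v" using eig_uniq(1)[OF ep xi_eigpair] a assms by auto
    then have "(\<lambda>n. \<xi> (t n) v) \<longlonglongrightarrow> \<xi> a v" using zt[OF assms] by simp
    then obtain N where "\<forall>n\<ge>N. dist (\<xi> (t n) v) (\<xi> a v) < e" using eh(1) unfolding LIMSEQ_def by blast
    then have "dist (\<xi> (t N) v) (\<xi> a v) < e" by simp
    moreover have "e \<le> dist (\<xi> (t N) v) (\<xi> a v)" using eh(3) unfolding t_def by simp
    ultimately show False by simp
  qed
qed

end



context kgx begin

lemma rho_pos:
  assumes "0 \<le> \<theta>" "i < k" "e \<in> Mor" "d e = unitv i"
  shows "0 < \<rho> \<theta> i"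
proof -
  have sV: "s e \<in> V" "r e \<in> V" using assms s_V r_V by auto
  have "B \<theta> i (r e) (s e) * \<xi> \<theta> (s e) \<le> (\<Sum>u\<in>V. B \<theta> i (r e) u * \<xi> \<theta> u)"
    using V_finite sV xi_basic(1)[OF assms(1)]
    by (intro member_le_sum) (auto intro: mult_nonneg_nonneg B_nonneg less_imp_le)
  moreover have "0 < B \<theta> i (r e) (s e) * \<xi> \<theta> (s e)"
    using B_edge_pos[OF assms(3,2,4)] xi_basic(1)[OF assms(1)] sV by simp
  ultimately have "0 < \<rho> \<theta> i * \<xi> \<theta> (r e)" using xi_basic(3)[OF assms(1)] assms(2) sV by simp
  then show ?thesis using xi_basic(1)[OF assms(1)] sV by (auto simp add: zero_less_mult_iff)
qed

lemma B_cont: "continuous_on S (\<lambda>\<theta>. B \<theta> i v w)"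
  unfolding Bmat_def by (intro continuous_intros)

lemma rho_cont: assumes "i < k" shows "continuous_on {0..} (\<lambda>\<theta>. \<rho> \<theta> i)"
proof -
  obtain v where v: "v \<in> V" using V_nonempty by blast
  have eq: "\<rho> \<theta> i = (\<Sum>w\<in>V. B \<theta> i v w * \<xi> \<theta> w) / \<xi> \<theta> v" if "\<theta> \<in> {0..}" for \<theta>
  proof -
    have t0: "0 \<le> \<theta>" using that by simp
    have "0 < \<xi> \<theta> v" using xi_basic(1)[OF t0] v by blast
    moreover have "(\<Sum>w\<in>V. B \<theta> i v w * \<xi> \<theta> w) = \<rho> \<theta> i * \<xi> \<theta> v" using xi_basic(3)[OF t0] v assms by blast
    ultimately show ?thesis by simp
  qed
  have c1: "continuous_on {0..} (\<lambda>\<theta>. \<Sum>w\<in>V. B \<theta> i v w * \<xi> \<theta> w)"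
  proof (rule continuous_on_sum)
    fix w assume "w \<in> V"
    then have "continuous_on {0..} (\<lambda>\<theta>. \<xi> \<theta> w)" by (rule xi_cont)
    then show "continuous_on {0..} (\<lambda>\<theta>. B \<theta> i v w * \<xi> \<theta> w)" by (rule continuous_on_mult[OF B_cont])
  qed
  have c2: "continuous_on {0..} (\<lambda>\<theta>. \<xi> \<theta> v)" using v by (rule xi_cont)
  have c3: "\<forall>x\<in>{0..}. \<xi> x v \<noteq> 0"
  proof
    fix x :: real assume "x \<in> {0..}"
    then have "0 < \<xi> x v" using xi_basic(1)[of x] v by simp
    then show "\<xi> x v \<noteq> 0" by simp
  qed
  have "continuous_on {0..} (\<lambda>\<theta>. (\<Sum>w\<in>V. B \<theta> i v w * \<xi> \<theta> w) / \<xi> \<theta> v)"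
    by (rule continuous_on_divide[OF c1 c2 c3])
  moreover have "continuous_on {0..} (\<lambda>\<theta>. \<rho> \<theta> i) = continuous_on {0..} (\<lambda>\<theta>. (\<Sum>w\<in>V. B \<theta> i v w * \<xi> \<theta> w) / \<xi> \<theta> v)"
    by (rule continuous_on_cong[OF HOL.refl eq])
  ultimately show ?thesis by simp
qed

end



context kg begin

abbreviation "P \<equiv> inf_paths k Mor r s cmp d"
abbreviation "T \<equiv> path_topology k Mor r s cmp d"
abbreviation "Z \<equiv> cyl k Mor r s cmp d"

lemma zerok_natk: "zerok \<in> natk k" by (simp add: natk_def zerok_def)
lemma zerok_le: "zerok \<le> n" by (simp add: zerok_def le_fun_def)

lemma path_props:
  assumes "x \<in> P" "m \<in> natk k" "n \<in> natk k" "m \<le> n"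
  shows "x m n \<in> Mor" "d (x m n) = (\<lambda>i. n i - m i)" "r (x m n) = x m m" "s (x m n) = x n n"
  using assms unfolding inf_paths_def by auto

lemma path_cmp:
  assumes "x \<in> P" "m \<in> natk k" "n \<in> natk k" "p \<in> natk k" "m \<le> n" "n \<le> p"
  shows "cmp (x m n) (x n p) = x m p"
  using assms unfolding inf_paths_def by blast

lemma path_vert: "x \<in> P \<Longrightarrow> m \<in> natk k \<Longrightarrow> x m m \<in> V"
  unfolding inf_paths_def by blast

lemma path_d0: assumes "x \<in> P" "n \<in> natk k" shows "d (x zerok n) = n"
  using path_props(2)[OF assms(1) zerok_natk assms(2) zerok_le] by (simp add: zerok_def)

lemma prefix:
  assumes x: "x \<in> P" and z: "z \<in> P" and n1: "n1 \<in> natk k" and n: "n \<in> natk k" and le: "n1 \<le> n"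
    and eq: "x zerok n = z zerok n"
  shows "x zerok n1 = z zerok n1"
proof -
  note px = path_props[OF x] and pz = path_props[OF z]
  have "x zerok n1 = z zerok n1 \<and> x n1 n = z n1 n"
  proof (rule uf_uniq)
    show "x zerok n1 \<in> Mor" "x n1 n \<in> Mor" "z zerok n1 \<in> Mor" "z n1 n \<in> Mor"
      using px(1) pz(1) zerok_natk n1 n le zerok_le by auto
    show "s (x zerok n1) = r (x n1 n)" "s (z zerok n1) = r (z n1 n)"
      using px(3,4) pz(3,4) zerok_natk n1 n le zerok_le by auto
    show "cmp (x zerok n1) (x n1 n) = cmp (z zerok n1) (z n1 n)"
      using path_cmp[OF x zerok_natk n1 n zerok_le le] path_cmp[OF z zerok_natk n1 n zerok_le le] eq by simp
    show "d (x zerok n1) = d (z zerok n1)" "d (x n1 n) = d (z n1 n)"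
      using px(2) pz(2) zerok_natk n1 n le zerok_le by auto
  qed
  then show ?thesis by simp
qed

lemma cyl_sub_P: "Z a \<subseteq> P" unfolding cyl_def by auto

lemma topspace_T: "topspace T = P"
proof -
  have "\<Union>(Z ` Mor) = P"
  proof
    show "\<Union>(Z ` Mor) \<subseteq> P" using cyl_sub_P by blast
    show "P \<subseteq> \<Union>(Z ` Mor)"
    proof
      fix x assume x: "x \<in> P"
      have v: "x zerok zerok \<in> Mor" using path_vert[OF x zerok_natk] V_Mor by blast
      have "d (x zerok zerok) = zerok" using path_d0[OF x zerok_natk] .
      then have "x \<in> Z (x zerok zerok)" using x unfolding cyl_def by simp
      then show "x \<in> \<Union>(Z ` Mor)" using v by blast
    qed
  qed
  then show ?thesis unfolding path_topology_def by simp
qed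

lemma cyl_open: "a \<in> Mor \<Longrightarrow> openin T (Z a)"
  unfolding path_topology_def openin_topology_generated_by_iff
  by (rule generate_topology_on.Basis) blast

lemma open_nbhd_aux:
  assumes "generate_topology_on (Z ` Mor) U"
  shows "\<forall>x\<in>U. x \<in> P \<longrightarrow> (\<exists>n\<in>natk k. {z\<in>P. z zerok n = x zerok n} \<subseteq> U)"
  using assms
proof (induction rule: generate_topology_on.induct)
  case Empty then show ?case by simp
next
  case (Int a b)
  show ?case
  proof (intro ballI impI)
    fix x assume x: "x \<in> a \<inter> b" "x \<in> P"
    obtain n1 where n1: "n1 \<in> natk k" "{z\<in>P. z zerok n1 = x zerok n1} \<subseteq> a" using Int x by blast
    obtain n2 where n2: "n2 \<in> natk k" "{z\<in>P. z zerok n2 = x zerok n2} \<subseteq> b" using Int x by blast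
    define n where "n = (\<lambda>i. n1 i + n2 i)"
    have n: "n \<in> natk k" "n1 \<le> n" "n2 \<le> n" using n1 n2 unfolding n_def natk_def le_fun_def by auto
    have "{z\<in>P. z zerok n = x zerok n} \<subseteq> a \<inter> b"
    proof
      fix z assume z: "z \<in> {z\<in>P. z zerok n = x zerok n}"
      then have "z zerok n1 = x zerok n1" "z zerok n2 = x zerok n2"
        using prefix[of z x] x n n1 n2 by auto
      then show "z \<in> a \<inter> b" using z n1 n2 by blast
    qed
    then show "\<exists>n\<in>natk k. {z\<in>P. z zerok n = x zerok n} \<subseteq> a \<inter> b" using n by blast
  qed
next
  case (UN K)
  show ?case
  proof (intro ballI impI)
    fix x assume x: "x \<in> \<Union>K" "x \<in> P"
    then obtain U where "U \<in> K" "x \<in> U" by blast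
    then obtain n where "n \<in> natk k" "{z\<in>P. z zerok n = x zerok n} \<subseteq> U" using UN x by blast
    then show "\<exists>n\<in>natk k. {z\<in>P. z zerok n = x zerok n} \<subseteq> \<Union>K" using \<open>U \<in> K\<close> by blast
  qed
next
  case (Basis S)
  then obtain a where a: "a \<in> Mor" "S = Z a" by blast
  show ?case
  proof (intro ballI impI)
    fix x assume x: "x \<in> S" "x \<in> P"
    then have "x zerok (d a) = a" using a unfolding cyl_def by simp
    then have "{z\<in>P. z zerok (d a) = x zerok (d a)} \<subseteq> S" using a unfolding cyl_def by auto
    then show "\<exists>n\<in>natk k. {z\<in>P. z zerok n = x zerok n} \<subseteq> S" using d_natk[OF a(1)] by blast
  qed
qed

lemma open_nbhd:
  assumes "openin T U" "x \<in> U"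
  obtains n where "n \<in> natk k" "{z\<in>P. z zerok n = x zerok n} \<subseteq> U"
proof -
  have "x \<in> P" using openin_subset[OF assms(1)] assms(2) topspace_T by blast
  moreover have "generate_topology_on (Z ` Mor) U"
    using assms(1) unfolding path_topology_def openin_topology_generated_by_iff .
  ultimately show ?thesis using open_nbhd_aux assms(2) that by blast
qed

end



context kg begin

definition Sset :: "(nat \<Rightarrow> nat) \<Rightarrow> (nat \<Rightarrow> nat) \<Rightarrow> 'a set" where
  "Sset m n = (if m \<in> natk k \<and> n \<in> natk k \<and> m \<le> n then {a\<in>Mor. d a = (\<lambda>i. n i - m i)} else {undefined})"

definition Prod where
  "Prod = product_topology (\<lambda>m. product_topology (\<lambda>n. discrete_topology (Sset m n)) UNIV) UNIV"

lemma Sset_finite: "finite (Sset m n)"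
proof (cases "m \<in> natk k \<and> n \<in> natk k \<and> m \<le> n")
  case True
  then have "(\<lambda>i. n i - m i) \<in> natk k" unfolding natk_def by auto
  then have "finite {a\<in>Mor. d a = (\<lambda>i. n i - m i)}" by (rule deg_finite)
  then show ?thesis unfolding Sset_def if_P[OF True] .
next
  case False
  then have "Sset m n = {undefined}" unfolding Sset_def by (rule if_not_P)
  then show ?thesis by simp
qed

lemma topspace_Prod: "topspace Prod = {x. \<forall>m n. x m n \<in> Sset m n}"
  unfolding Prod_def by (auto simp: PiE_UNIV_domain Pi_def)

lemma compact_Prod: "compact_space Prod"
  unfolding Prod_def compact_space_product_topology
  by (simp add: compact_space_discrete_topology Sset_finite)

lemma proj_cont: "continuous_map Prod (discrete_topology (Sset a b)) (\<lambda>x. x a b)"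
proof -
  have c1: "continuous_map Prod (product_topology (\<lambda>n. discrete_topology (Sset a n)) UNIV) (\<lambda>x. x a)"
    unfolding Prod_def by (rule continuous_map_product_projection) simp
  have c2: "continuous_map (product_topology (\<lambda>n. discrete_topology (Sset a n)) UNIV) (discrete_topology (Sset a b)) (\<lambda>g. g b)"
    by (rule continuous_map_product_projection) simp
  from continuous_map_compose[OF c1 c2] show ?thesis by (simp add: o_def)
qed

lemma triple_closed:
  "closedin Prod {x\<in>topspace Prod. Q (x a1 b1) (x a2 b2) (x a3 b3)}"
proof -
  let ?D = "discrete_topology (Sset a1 b1 \<times> (Sset a2 b2 \<times> Sset a3 b3))"
  have "continuous_map Prod (prod_topology (discrete_topology (Sset a1 b1))
          (prod_topology (discrete_topology (Sset a2 b2)) (discrete_topology (Sset a3 b3))))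
          (\<lambda>x. (x a1 b1, (x a2 b2, x a3 b3)))"
    by (intro continuous_map_pairedI proj_cont)
  then have c: "continuous_map Prod ?D (\<lambda>x. (x a1 b1, (x a2 b2, x a3 b3)))"
    by (simp add: prod_topology_discrete_topology)
  have "closedin ?D {(u, v, w). (u, v, w) \<in> Sset a1 b1 \<times> (Sset a2 b2 \<times> Sset a3 b3) \<and> Q u v w}"
    by auto
  from closedin_continuous_map_preimage[OF c this]
  have "closedin Prod {x \<in> topspace Prod. (x a1 b1, x a2 b2, x a3 b3) \<in> {(u, v, w). (u, v, w) \<in> Sset a1 b1 \<times> (Sset a2 b2 \<times> Sset a3 b3) \<and> Q u v w}}" .
  moreover have "{x \<in> topspace Prod. (x a1 b1, x a2 b2, x a3 b3) \<in> {(u, v, w). (u, v, w) \<in> Sset a1 b1 \<times> (Sset a2 b2 \<times> Sset a3 b3) \<and> Q u v w}}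
     = {x\<in>topspace Prod. Q (x a1 b1) (x a2 b2) (x a3 b3)}"
    using topspace_Prod by auto
  ultimately show ?thesis by simp
qed

definition "CR m n = {x\<in>topspace Prod. m \<in> natk k \<and> n \<in> natk k \<and> m \<le> n \<longrightarrow> r (x m n) = x m m \<and> s (x m n) = x n n}"
definition "CV m = {x\<in>topspace Prod. m \<in> natk k \<longrightarrow> x m m \<in> V}"
definition "CC m n p = {x\<in>topspace Prod. m \<in> natk k \<and> n \<in> natk k \<and> p \<in> natk k \<and> m \<le> n \<and> n \<le> p \<longrightarrow> cmp (x m n) (x n p) = x m p}"

lemma CR_closed: "closedin Prod (CR m n)"
  using triple_closed[of "\<lambda>u v w. m \<in> natk k \<and> n \<in> natk k \<and> m \<le> n \<longrightarrow> r u = v \<and> s u = w" m n m m n n]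
  unfolding CR_def by simp
lemma CV_closed: "closedin Prod (CV m)"
  using triple_closed[of "\<lambda>u v w. m \<in> natk k \<longrightarrow> u \<in> V" m m m m m m]
  unfolding CV_def by simp
lemma CC_closed: "closedin Prod (CC m n p)"
  using triple_closed[of "\<lambda>u v w. m \<in> natk k \<and> n \<in> natk k \<and> p \<in> natk k \<and> m \<le> n \<and> n \<le> p \<longrightarrow> cmp u v = w" m n n p m p]
  unfolding CC_def by simp

lemma path_undef: "x \<in> P \<Longrightarrow> \<not> (m \<in> natk k \<and> n \<in> natk k \<and> m \<le> n) \<Longrightarrow> x m n = undefined"
  unfolding inf_paths_def by simp

lemma P_eq: "P = \<Inter>({topspace Prod} \<union> range (\<lambda>(m,n). CR m n) \<union> range CV \<union> range (\<lambda>(m,n,p). CC m n p))"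
proof
  show "P \<subseteq> \<Inter>({topspace Prod} \<union> range (\<lambda>(m,n). CR m n) \<union> range CV \<union> range (\<lambda>(m,n,p). CC m n p))"
  proof
    fix x assume x: "x \<in> P"
    have tp: "x \<in> topspace Prod"
      unfolding topspace_Prod
    proof (intro CollectI allI)
      fix m n
      show "x m n \<in> Sset m n"
      proof (cases "m \<in> natk k \<and> n \<in> natk k \<and> m \<le> n")
        case True
        then have "x m n \<in> {a\<in>Mor. d a = (\<lambda>i. n i - m i)}" using path_props[OF x] by blast
        then show ?thesis unfolding Sset_def if_P[OF True] .
      next
        case False
        then have "x m n = undefined" using x path_undef by blast
        then show ?thesis unfolding Sset_def if_not_P[OF False] by simp
      qed
    qed
    have "x \<in> CR m n" for m n using tp path_props(3,4)[OF x] unfolding CR_def by simp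
    moreover have "x \<in> CV m" for m using tp path_vert[OF x] unfolding CV_def by simp
    moreover have "x \<in> CC m n p" for m n p using tp path_cmp[OF x] unfolding CC_def by simp
    ultimately show "x \<in> \<Inter>({topspace Prod} \<union> range (\<lambda>(m,n). CR m n) \<union> range CV \<union> range (\<lambda>(m,n,p). CC m n p))"
      using tp by fast
  qed
next
  show "\<Inter>({topspace Prod} \<union> range (\<lambda>(m,n). CR m n) \<union> range CV \<union> range (\<lambda>(m,n,p). CC m n p)) \<subseteq> P"
  proof
    fix x assume x: "x \<in> \<Inter>({topspace Prod} \<union> range (\<lambda>(m,n). CR m n) \<union> range CV \<union> range (\<lambda>(m,n,p). CC m n p))"
    have tp: "\<forall>m n. x m n \<in> Sset m n" using x topspace_Prod by auto
    have cr: "\<And>m n. x \<in> CR m n" using x by fast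
    have cv: "\<And>m. x \<in> CV m" using x by fast
    have cc: "\<And>m n p. x \<in> CC m n p" using x by fast
    show "x \<in> P"
      unfolding inf_paths_def
    proof (intro CollectI conjI allI impI ballI)
      fix m n assume "\<not> (m \<in> natk k \<and> n \<in> natk k \<and> m \<le> n)"
      then have "Sset m n = {undefined}" unfolding Sset_def by (rule if_not_P)
      then show "x m n = undefined" using tp by blast
    next
      fix m n assume mn: "m \<in> natk k" "n \<in> natk k" "m \<le> n"
      have "Sset m n = {a\<in>Mor. d a = (\<lambda>i. n i - m i)}" using mn unfolding Sset_def by (intro if_P) simp
      then show "x m n \<in> Mor" "d (x m n) = (\<lambda>i. n i - m i)" using tp by blast+
      show "r (x m n) = x m m" "s (x m n) = x n n" using mn cr[of m n] unfolding CR_def by auto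
    next
      fix m assume "m \<in> natk k"
      then show "x m m \<in> V" using cv[of m] unfolding CV_def by auto
    next
      fix m n p assume "m \<in> natk k" "n \<in> natk k" "p \<in> natk k" "m \<le> n" "n \<le> p"
      then show "cmp (x m n) (x n p) = x m p" using cc[of m n p] unfolding CC_def by auto
    qed
  qed
qed

lemma P_compact: "compactin Prod P"
proof -
  have "closedin Prod P"
    unfolding P_eq
  proof (rule closedin_Inter)
    fix S assume "S \<in> {topspace Prod} \<union> range (\<lambda>(m,n). CR m n) \<union> range CV \<union> range (\<lambda>(m,n,p). CC m n p)"
    then show "closedin Prod S"
      using CR_closed CV_closed CC_closed by auto
  qed auto
  then show ?thesis using compact_Prod closedin_compact_space by blast
qed

lemma P_sub_Prod: "P \<subseteq> topspace Prod"
  using compactin_subset_topspace[OF P_compact] .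

lemma cylx_open: "openin Prod {z\<in>topspace Prod. z zerok n = c}"
proof -
  have "openin Prod {z\<in>topspace Prod. z zerok n \<in> {c} \<inter> Sset zerok n}"
    by (rule openin_continuous_map_preimage[OF proj_cont]) simp
  moreover have "{z\<in>topspace Prod. z zerok n \<in> {c} \<inter> Sset zerok n} = {z\<in>topspace Prod. z zerok n = c}"
    using topspace_Prod by auto
  ultimately show ?thesis by simp
qed

lemma unif:
  assumes f: "continuous_map T euclideanreal f" and e: "e > 0"
  shows "\<exists>N\<in>natk k. \<forall>x\<in>P. \<forall>z\<in>P. x zerok N = z zerok N \<longrightarrow> \<bar>f x - f z\<bar> < e"
proof -
  have "\<forall>x\<in>P. \<exists>n. n \<in> natk k \<and> {z\<in>P. z zerok n = x zerok n} \<subseteq> {z\<in>topspace T. f z \<in> ball (f x) (e/2)}"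
  proof
    fix x assume x: "x \<in> P"
    have o: "openin T {z\<in>topspace T. f z \<in> ball (f x) (e/2)}"
      by (rule openin_continuous_map_preimage[OF f]) simp
    have "x \<in> {z\<in>topspace T. f z \<in> ball (f x) (e/2)}" using x e topspace_T by simp
    from open_nbhd[OF o this] show "\<exists>n. n \<in> natk k \<and> {z\<in>P. z zerok n = x zerok n} \<subseteq> {z\<in>topspace T. f z \<in> ball (f x) (e/2)}"
      by blast
  qed
  then have "\<exists>nx. \<forall>x\<in>P. nx x \<in> natk k \<and> {z\<in>P. z zerok (nx x) = x zerok (nx x)} \<subseteq> {z\<in>topspace T. f z \<in> ball (f x) (e/2)}"
    by (rule bchoice)
  then obtain nx where nx: "\<forall>x\<in>P. nx x \<in> natk k \<and> {z\<in>P. z zerok (nx x) = x zerok (nx x)} \<subseteq> {z\<in>topspace T. f z \<in> ball (f x) (e/2)}"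
    by (rule exE)
  define Ox where "Ox x = {z\<in>topspace Prod. z zerok (nx x) = x zerok (nx x)}" for x
  have "\<exists>F. finite F \<and> F \<subseteq> Ox ` P \<and> P \<subseteq> \<Union>F"
  proof -
    have "\<forall>U\<in>Ox ` P. openin Prod U" unfolding Ox_def using cylx_open by blast
    moreover have "P \<subseteq> \<Union>(Ox ` P)" unfolding Ox_def using P_sub_Prod by blast
    moreover have "\<forall>\<U>. (\<forall>U \<in> \<U>. openin Prod U) \<and> P \<subseteq> \<Union>\<U> \<longrightarrow> (\<exists>\<F>. finite \<F> \<and> \<F> \<subseteq> \<U> \<and> P \<subseteq> \<Union>\<F>)"
      using P_compact unfolding compactin_def by (rule conjunct2)
    ultimately show ?thesis by (simp only: simp_thms)
  qed
  then obtain F where F: "finite F" "F \<subseteq> Ox ` P" "P \<subseteq> \<Union>F" by blast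
  obtain X0 where X0: "X0 \<subseteq> P" "finite X0" "F = Ox ` X0"
    using finite_subset_image[OF F(1,2)] by blast
  define N where "N = (\<lambda>i. \<Sum>x\<in>X0. nx x i)"
  have N: "N \<in> natk k" unfolding natk_def N_def
  proof (intro CollectI allI impI)
    fix i assume "k \<le> i"
    then have "\<forall>x\<in>X0. nx x i = 0" using nx X0(1) unfolding natk_def by blast
    then show "(\<Sum>x\<in>X0. nx x i) = 0" by simp
  qed
  have le: "nx x \<le> N" if "x \<in> X0" for x
    unfolding le_fun_def N_def using X0(2) that by (auto intro: member_le_sum)
  have "\<forall>x1\<in>P. \<forall>z1\<in>P. x1 zerok N = z1 zerok N \<longrightarrow> \<bar>f x1 - f z1\<bar> < e"
  proof (intro ballI impI)
    fix x1 z1 assume x1: "x1 \<in> P" and z1: "z1 \<in> P" and eq: "x1 zerok N = z1 zerok N"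
    obtain x where x: "x \<in> X0" "x1 \<in> Ox x" using F(3) X0(3) x1 by blast
    have xP: "x \<in> P" using x X0 by blast
    have nxx: "nx x \<in> natk k" using nx xP by blast
    have a1: "x1 zerok (nx x) = x zerok (nx x)" using x unfolding Ox_def by simp
    have a2: "z1 zerok (nx x) = x1 zerok (nx x)"
      using prefix[OF z1 x1 nxx N le[OF x(1)]] eq by simp
    have "x1 \<in> {z\<in>P. z zerok (nx x) = x zerok (nx x)}" "z1 \<in> {z\<in>P. z zerok (nx x) = x zerok (nx x)}"
      using a1 a2 x1 z1 by auto
    then have "f x1 \<in> ball (f x) (e/2)" "f z1 \<in> ball (f x) (e/2)" using nx xP by blast+
    then show "\<bar>f x1 - f z1\<bar> < e" unfolding mem_ball dist_real_def by linarith
  qed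
  then show ?thesis using N by blast
qed

end



locale kgm = kgx +
  fixes \<mu> :: "real \<Rightarrow> ((nat \<Rightarrow> nat) \<Rightarrow> (nat \<Rightarrow> nat) \<Rightarrow> 'a) measure"
  assumes MU: "\<And>\<theta>. 0 \<le> \<theta> \<Longrightarrow> is_mu k Mor r s cmp d y \<theta> (\<xi> \<theta>) (\<mu> \<theta>)"
begin

lemma mu_all: assumes "0 \<le> \<theta>" shows "prob_space (\<mu> \<theta>) \<and> sets (\<mu> \<theta>) = sets (borel_of T) \<and>
   space (\<mu> \<theta>) = topspace T \<and>
   (\<forall>a\<in>Mor. measure (\<mu> \<theta>) (Z a) = exp (- \<theta> * y a) / rhoB_pow k Mor r s d y \<theta> (d a) * \<xi> \<theta> (s a))"
  using MU[OF assms] unfolding is_mu_def .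
lemma mu_prob: "0 \<le> \<theta> \<Longrightarrow> prob_space (\<mu> \<theta>)" using mu_all by (rule conjunct1)
lemma mu_space: "0 \<le> \<theta> \<Longrightarrow> space (\<mu> \<theta>) = P"
proof -
  assume "0 \<le> \<theta>"
  then have "space (\<mu> \<theta>) = topspace T" using mu_all by blast
  then show ?thesis using topspace_T by simp
qed
lemma mu_sets: "0 \<le> \<theta> \<Longrightarrow> sets (\<mu> \<theta>) = sets (borel_of T)" using mu_all by blast
lemma mu_cyl: "0 \<le> \<theta> \<Longrightarrow> a \<in> Mor \<Longrightarrow>
   measure (\<mu> \<theta>) (Z a) = exp (- \<theta> * y a) / rhoB_pow k Mor r s d y \<theta> (d a) * \<xi> \<theta> (s a)"
proof -
  assume t: "0 \<le> \<theta>" and a: "a \<in> Mor"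
  have "\<forall>a\<in>Mor. measure (\<mu> \<theta>) (Z a) = exp (- \<theta> * y a) / rhoB_pow k Mor r s d y \<theta> (d a) * \<xi> \<theta> (s a)"
    using mu_all[OF t] by (elim conjE)
  then show ?thesis using a by (rule bspec)
qed

lemma P_ne: "P \<noteq> {}"
  using prob_space.not_empty[OF mu_prob[of 0]] mu_space[of 0] by simp

lemma edge_ex: assumes "i < k" shows "\<exists>e\<in>Mor. d e = unitv i"
proof -
  obtain x where x: "x \<in> P" using P_ne by blast
  have u: "unitv i \<in> natk k" using unitv_natk[OF assms] .
  have "x zerok (unitv i) \<in> Mor" using path_props(1)[OF x zerok_natk u zerok_le] .
  moreover have "d (x zerok (unitv i)) = unitv i" using path_d0[OF x u] .
  ultimately show ?thesis by blast
qed

lemma rho_pos': "0 \<le> \<theta> \<Longrightarrow> i < k \<Longrightarrow> 0 < \<rho> \<theta> i"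
proof -
  assume a: "0 \<le> \<theta>" "i < k"
  then obtain e where "e \<in> Mor" "d e = unitv i" using edge_ex by blast
  then show ?thesis using rho_pos[OF a] by blast
qed

lemma open_sets: assumes "0 \<le> \<theta>" "openin T U" shows "U \<in> sets (\<mu> \<theta>)"
proof -
  have "{U. openin T U} \<subseteq> Pow (topspace T)" using openin_subset by blast
  then have "sets (borel_of T) = sigma_sets (topspace T) {U. openin T U}"
    unfolding borel_of_def by (rule sets_measure_of)
  moreover have "U \<in> sigma_sets (topspace T) {U. openin T U}" using assms(2) by (intro sigma_sets.Basic) simp
  ultimately show ?thesis using mu_sets[OF assms(1)] by simp
qed

lemma cyl_sets: assumes "0 \<le> \<theta>" "a \<in> Mor" shows "Z a \<in> sets (\<mu> \<theta>)"
proof -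
  have "openin T (Z a)" using assms(2) by (rule cyl_open)
  then show ?thesis using assms(1) open_sets by blast
qed

lemma f_meas: assumes "0 \<le> \<theta>" "continuous_map T euclideanreal f"
  shows "f \<in> borel_measurable (\<mu> \<theta>)"
proof (rule borel_measurableI)
  fix S :: "real set" assume S: "open S"
  have "openin euclideanreal S" using S by simp
  then have o: "openin T {x\<in>topspace T. f x \<in> S}"
    by (rule openin_continuous_map_preimage[OF assms(2)])
  have sp: "space (\<mu> \<theta>) = topspace T" using mu_all[OF assms(1)] by (elim conjE)
  have "f -` S \<inter> space (\<mu> \<theta>) = {x\<in>topspace T. f x \<in> S}"
    unfolding sp by blast
  moreover have "{x\<in>topspace T. f x \<in> S} \<in> sets (\<mu> \<theta>)" by (rule open_sets[OF assms(1) o])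
  ultimately show "f -` S \<inter> space (\<mu> \<theta>) \<in> sets (\<mu> \<theta>)" by simp
qed

lemma cyl_cont: assumes a: "a \<in> Mor" shows "continuous_on {0..} (\<lambda>\<theta>. measure (\<mu> \<theta>) (Z a))"
proof -
  have c1: "continuous_on {0..} (\<lambda>\<theta>. rhoB_pow k Mor r s d y \<theta> (d a))"
    unfolding rhoB_pow_def
  proof (rule continuous_on_prod)
    fix i assume "i \<in> {..<k}"
    then have "continuous_on {0..} (\<lambda>\<theta>. \<rho> \<theta> i)" using rho_cont by simp
    then show "continuous_on {0..} (\<lambda>\<theta>. \<rho> \<theta> i ^ d a i)" by (rule continuous_on_power)
  qed
  have c2: "\<forall>\<theta>\<in>{0..}. rhoB_pow k Mor r s d y \<theta> (d a) \<noteq> 0"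
  proof
    fix \<theta> :: real assume "\<theta> \<in> {0..}"
    then have "\<forall>i\<in>{..<k}. 0 < \<rho> \<theta> i ^ d a i" using rho_pos' by simp
    then have "0 < (\<Prod>i<k. \<rho> \<theta> i ^ d a i)" by (intro prod_pos) blast
    then show "rhoB_pow k Mor r s d y \<theta> (d a) \<noteq> 0" unfolding rhoB_pow_def by (metis less_irrefl)
  qed
  have c3: "continuous_on {0..} (\<lambda>\<theta>. exp (- \<theta> * y a))" by (intro continuous_intros)
  have c4: "continuous_on {0..} (\<lambda>\<theta>. \<xi> \<theta> (s a))" using xi_cont s_V[OF a] by blast
  have "continuous_on {0..} (\<lambda>\<theta>. exp (- \<theta> * y a) / rhoB_pow k Mor r s d y \<theta> (d a) * \<xi> \<theta> (s a))"
    by (rule continuous_on_mult[OF continuous_on_divide[OF c3 c1 c2] c4])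
  moreover have "continuous_on {0..} (\<lambda>\<theta>. measure (\<mu> \<theta>) (Z a)) = continuous_on {0..} (\<lambda>\<theta>. exp (- \<theta> * y a) / rhoB_pow k Mor r s d y \<theta> (d a) * \<xi> \<theta> (s a))"
    by (rule continuous_on_cong[OF HOL.refl]) (simp add: mu_cyl a)
  ultimately show ?thesis by simp
qed

end



context kgm begin

lemma approx:
  assumes N: "N \<in> natk k"
    and uN: "\<forall>x\<in>P. \<forall>z\<in>P. x zerok N = z zerok N \<longrightarrow> \<bar>f x - f z\<bar> < e"
    and t: "0 \<le> \<theta>" and fm: "f \<in> borel_measurable (\<mu> \<theta>)"
  shows "\<bar>integral\<^sup>L (\<mu> \<theta>) f - (\<Sum>a\<in>{a\<in>Mor. d a = N}. f (SOME x. x \<in> Z a) * measure (\<mu> \<theta>) (Z a))\<bar> \<le> e"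
proof -
  let ?M = "\<mu> \<theta>"
  interpret prob_space ?M by (rule mu_prob[OF t])
  define L where "L = {a\<in>Mor. d a = N}"
  have finL: "finite L" unfolding L_def using deg_finite[OF N] .
  define c where "c a = f (SOME x. x \<in> Z a)" for a
  define g where "g x = (\<Sum>a\<in>L. c a * indicator (Z a) x)" for x
  have sp: "space ?M = P" by (rule mu_space[OF t])
  have xL: "x zerok N \<in> L" if x: "x \<in> P" for x
    using path_props(1)[OF x zerok_natk N zerok_le] path_d0[OF x N] unfolding L_def by blast
  have gx: "g x = c (x zerok N)" if x: "x \<in> P" for x
  proof -
    have "\<And>a. a \<in> L \<Longrightarrow> c a * indicator (Z a) x = (if a = x zerok N then c a else 0)"
    proof -
      fix a assume a: "a \<in> L"
      then have da: "d a = N" unfolding L_def by blast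
      have "x \<in> Z a \<longleftrightarrow> x zerok N = a" using x da unfolding cyl_def by auto
      then show "c a * indicator (Z a) x = (if a = x zerok N then c a else 0)"
        unfolding indicator_def by auto
    qed
    then have "g x = (\<Sum>a\<in>L. (if a = x zerok N then c a else 0))" unfolding g_def by (rule sum.cong[OF HOL.refl])
    also have "\<dots> = c (x zerok N)" using finL xL[OF x] by (simp add: sum.delta')
    finally show ?thesis .
  qed
  have close: "\<bar>f x - g x\<bar> < e" if x: "x \<in> P" for x
  proof -
    let ?a = "x zerok N"
    have ex: "\<exists>z. z \<in> Z ?a"
    proof
      show "x \<in> Z ?a" using x path_d0[OF x N] unfolding cyl_def by simp
    qed
    have rep: "(SOME z. z \<in> Z ?a) \<in> Z ?a" using someI_ex[OF ex] .
    then have "(SOME z. z \<in> Z ?a) \<in> P" "(SOME z. z \<in> Z ?a) zerok N = x zerok N"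
      unfolding cyl_def using path_d0[OF x N] by auto
    then have "\<bar>f x - f (SOME z. z \<in> Z ?a)\<bar> < e" using uN x by metis
    then show ?thesis using gx[OF x] unfolding c_def by simp
  qed
  have Zs: "Z a \<in> sets ?M" if "a \<in> L" for a using cyl_sets[OF t] that unfolding L_def by blast
  have gi: "integrable ?M g"
    unfolding g_def
  proof (rule Bochner_Integration.integrable_sum)
    fix a assume a: "a \<in> L"
    have "integrable ?M (indicator (Z a) :: _ \<Rightarrow> real)"
      using Zs[OF a] by (intro integrable_real_indicator) (auto simp: less_top[symmetric])
    then show "integrable ?M (\<lambda>x. c a * indicator (Z a) x)" by (intro integrable_mult_right)
  qed
  have gint: "integral\<^sup>L ?M g = (\<Sum>a\<in>L. c a * measure ?M (Z a))"
  proof -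
    have "integral\<^sup>L ?M g = (\<Sum>a\<in>L. integral\<^sup>L ?M (\<lambda>x. c a * indicator (Z a) x))"
      unfolding g_def
    proof (rule Bochner_Integration.integral_sum)
      fix a assume a: "a \<in> L"
      have "integrable ?M (indicator (Z a) :: _ \<Rightarrow> real)"
        using Zs[OF a] by (intro integrable_real_indicator) (auto simp: less_top[symmetric])
      then show "integrable ?M (\<lambda>x. c a * indicator (Z a) x)" by (intro integrable_mult_right)
    qed
    also have "\<dots> = (\<Sum>a\<in>L. c a * measure ?M (Z a))"
    proof (rule sum.cong[OF HOL.refl])
      fix a assume a: "a \<in> L"
      have "integral\<^sup>L ?M (\<lambda>x. c a * indicator (Z a) x) = c a * integral\<^sup>L ?M (indicator (Z a))"
        by (rule integral_mult_right_zero)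
      also have "\<dots> = c a * measure ?M (Z a \<inter> space ?M)" by simp
      also have "Z a \<inter> space ?M = Z a" using sp cyl_sub_P by blast
      finally show "integral\<^sup>L ?M (\<lambda>x. c a * indicator (Z a) x) = c a * measure ?M (Z a)" .
    qed
    finally show ?thesis .
  qed
  have fi: "integrable ?M f"
  proof (rule integrable_const_bound[where B="e + (\<Sum>a\<in>L. \<bar>c a\<bar>)"])
    show "f \<in> borel_measurable ?M" by (rule fm)
    show "AE x in ?M. norm (f x) \<le> e + (\<Sum>a\<in>L. \<bar>c a\<bar>)"
    proof (rule AE_I2)
      fix x assume "x \<in> space ?M"
      then have x: "x \<in> P" using sp by simp
      have "\<bar>c (x zerok N)\<bar> \<le> (\<Sum>a\<in>L. \<bar>c a\<bar>)" using finL xL[OF x] by (intro member_le_sum) auto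
      then show "norm (f x) \<le> e + (\<Sum>a\<in>L. \<bar>c a\<bar>)" using close[OF x] gx[OF x] by simp
    qed
  qed
  have "\<bar>integral\<^sup>L ?M f - integral\<^sup>L ?M g\<bar> = \<bar>integral\<^sup>L ?M (\<lambda>x. f x - g x)\<bar>"
    using fi gi by simp
  also have "\<dots> \<le> integral\<^sup>L ?M (\<lambda>x. \<bar>f x - g x\<bar>)"
    using integral_norm_bound[of ?M "\<lambda>x. f x - g x"] by simp
  also have "\<dots> \<le> integral\<^sup>L ?M (\<lambda>x. e)"
  proof (rule integral_mono)
    show "integrable ?M (\<lambda>x. \<bar>f x - g x\<bar>)" using fi gi by (intro integrable_abs) simp
    show "integrable ?M (\<lambda>x. e)" by simp
    fix x assume "x \<in> space ?M"
    then show "\<bar>f x - g x\<bar> \<le> e" using close sp by (simp add: less_imp_le)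
  qed
  also have "\<dots> = e" using prob_space by simp
  finally show ?thesis using gint unfolding L_def c_def by simp
qed

lemma main:
  assumes f: "continuous_map T euclideanreal f"
  shows "continuous_on {0..} (\<lambda>\<theta>. integral\<^sup>L (\<mu> \<theta>) f)"
  unfolding continuous_on_iff
proof (intro ballI allI impI)
  fix \<theta>0 :: real and e :: real
  assume t0: "\<theta>0 \<in> {0..}" and e: "0 < e"
  obtain N where N: "N \<in> natk k" and uN: "\<forall>x\<in>P. \<forall>z\<in>P. x zerok N = z zerok N \<longrightarrow> \<bar>f x - f z\<bar> < e/4"
    using unif[OF f, of "e/4"] e by auto
  define L where "L = {a\<in>Mor. d a = N}"
  define G where "G \<theta> = (\<Sum>a\<in>L. f (SOME x. x \<in> Z a) * measure (\<mu> \<theta>) (Z a))" for \<theta>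
  have Gc: "continuous_on {0..} G"
    unfolding G_def
  proof (rule continuous_on_sum)
    fix a assume "a \<in> L"
    then have "a \<in> Mor" unfolding L_def by blast
    then show "continuous_on {0..} (\<lambda>\<theta>. f (SOME x. x \<in> Z a) * measure (\<mu> \<theta>) (Z a))"
      by (rule continuous_on_mult[OF continuous_on_const cyl_cont])
  qed
  have ap: "\<bar>integral\<^sup>L (\<mu> \<theta>) f - G \<theta>\<bar> \<le> e/4" if "\<theta> \<in> {0..}" for \<theta>
  proof -
    have th: "0 \<le> \<theta>" using that by simp
    show ?thesis unfolding G_def L_def by (rule approx[OF N uN th f_meas[OF th f]])
  qed
  obtain \<delta> where \<delta>: "\<delta> > 0" "\<forall>x'\<in>{0..}. dist x' \<theta>0 < \<delta> \<longrightarrow> dist (G x') (G \<theta>0) < e/4"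
    using Gc t0 e unfolding continuous_on_iff by (metis divide_pos_pos zero_less_numeral)
  show "\<exists>\<delta>>0. \<forall>x'\<in>{0..}. dist x' \<theta>0 < \<delta> \<longrightarrow> dist (integral\<^sup>L (\<mu> x') f) (integral\<^sup>L (\<mu> \<theta>0) f) < e"
  proof (intro exI conjI ballI impI)
    show "\<delta> > 0" by (rule \<delta>(1))
    fix x' :: real assume x': "x' \<in> {0..}" "dist x' \<theta>0 < \<delta>"
    have a1: "\<bar>integral\<^sup>L (\<mu> x') f - G x'\<bar> \<le> e/4" using ap[OF x'(1)] .
    have a2: "\<bar>integral\<^sup>L (\<mu> \<theta>0) f - G \<theta>0\<bar> \<le> e/4" using ap[OF t0] .
    have a3: "\<bar>G x' - G \<theta>0\<bar> < e/4" using \<delta>(2) x' unfolding dist_real_def by blast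
    show "dist (integral\<^sup>L (\<mu> x') f) (integral\<^sup>L (\<mu> \<theta>0) f) < e"
      unfolding dist_real_def using a1 a2 a3 e by linarith
  qed
qed

end

theorem corollary3p7:
  fixes k :: nat and Mor :: "'a set" and r s :: "'a \<Rightarrow> 'a"
    and cmp :: "'a \<Rightarrow> 'a \<Rightarrow> 'a" and d :: "'a \<Rightarrow> nat \<Rightarrow> nat"
    and y :: "'a \<Rightarrow> real"
    and \<xi> :: "real \<Rightarrow> 'a \<Rightarrow> real"
    and \<mu> :: "real \<Rightarrow> ((nat \<Rightarrow> nat) \<Rightarrow> (nat \<Rightarrow> nat) \<Rightarrow> 'a) measure"
  assumes "kgraph k Mor r s cmp d"
    and "finite_kgraph k Mor d"
    and "strongly_connected Mor r s"
    and "Rplus_functor Mor r s cmp y"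
    and "\<And>\<theta>. 0 \<le> \<theta> \<Longrightarrow> is_xi k Mor r s d y \<theta> (\<xi> \<theta>)"
    and "\<And>\<theta>. 0 \<le> \<theta> \<Longrightarrow> is_mu k Mor r s cmp d y \<theta> (\<xi> \<theta>) (\<mu> \<theta>)"
  shows "\<forall>f. continuous_map (path_topology k Mor r s cmp d) euclideanreal f \<longrightarrow>
           continuous_on {0..} (\<lambda>\<theta>. integral\<^sup>L (\<mu> \<theta>) f)"
proof -
  interpret kgm k Mor r s cmp d y \<xi> \<mu>
    by (unfold_locales) (use assms in auto)
  show ?thesis using main by blast
qed


end
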